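(* Let $q\in(0,1]$. Then $\mathrm{Kaz}(\rho,R(SU_q(2)))=1-\frac{2}{[2]_q}=\frac{(1-q)^2}{q^2+1}$.
   Context: $R(SU_q(2))$ is the fusion algebra with irreducible objects $I=\mathbb{Z}_+$, unit $0$, trivial involution, product $m\cdot n=\sum_{k\in\{|m-n|,|m-n|+2,\dots,m+n\}}k=\sum_k N^k_{m,n}k$, and dimension $d(n)=[n+1]_q$, where $[x]_q=\frac{q^{-x}-q^x}{q^{-1}-q}$ for $0<q<1$ and $[x]_1=x$. Let $\mathcal{C}_R=\mathbb{C}[I]$ be its complexification (a unital $*$-algebra). The right regular representation $\rho:\mathcal{C}_R\to B(\ell^2(I))$ is given by $\rho(m)\delta_n=\sum_{k\in I}N^k_{n,\bar m}\delta_k$. A finite generating set is a finite $X\subseteq I$ such that every element of $I$ appears with nonzero coefficient in some product of elements of $X$. For a unital $*$-representation $\pi$ on $H_\pi$ and a finite generating set $X$, $\mathrm{Kaz}(X,\pi,R)=\inf_{\xi\in H_\pi,\|\xi\|=1}\max_{m\in X}\frac{\|\pi(m)\xi-d(m)\xi\|}{d(m)}$, and $\mathrm{Kaz}(\pi,R)=\inf_X\mathrm{Kaz}(X,\pi,R)$ over all finite generating sets $X$. *)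

theory Defs
  imports "HOL-Analysis.Analysis"
begin

definition qnum :: "real \<Rightarrow> real \<Rightarrow> real" where
  "qnum q x = (if q = 1 then x else (q powr (-x) - q powr x) / (q powr (-1) - q))"

text \<open>Dimension function of R(SU_q(2)): d(n) = [n+1]_q.\<close>
definition dimq :: "real \<Rightarrow> nat \<Rightarrow> real" where
  "dimq q n = qnum q (real n + 1)"

text \<open>Fusion coefficients N^k_{m,n} of R(SU_q(2)) (Clebsch-Gordan rule).\<close>
definition fus :: "nat \<Rightarrow> nat \<Rightarrow> nat \<Rightarrow> nat" where
  "fus k m n = (if nat \<bar>int m - int n\<bar> \<le> k \<and> k \<le> m + n \<and> even (m + n + k) then 1 else 0)"

text \<open>Elements of the fusion algebra with nonnegative integer coefficients are
  finitely supported functions nat => nat; product in the fusion algebra.\<close>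
definition fmult :: "(nat \<Rightarrow> nat) \<Rightarrow> (nat \<Rightarrow> nat) \<Rightarrow> (nat \<Rightarrow> nat)" where
  "fmult a b = (\<lambda>k. \<Sum>m\<in>{m. a m \<noteq> 0}. \<Sum>n\<in>{n. b n \<noteq> 0}. a m * b n * fus k m n)"

definition basis_el :: "nat \<Rightarrow> (nat \<Rightarrow> nat)" where
  "basis_el m = (\<lambda>k. if k = m then 1 else 0)"

definition word_prod :: "nat list \<Rightarrow> (nat \<Rightarrow> nat)" where
  "word_prod w = foldr (\<lambda>m acc. fmult (basis_el m) acc) w (basis_el 0)"

definition fin_gen_set :: "nat set \<Rightarrow> bool" where
  "fin_gen_set X \<longleftrightarrow> finite X \<and>
     (\<forall>k. \<exists>w. w \<noteq> [] \<and> set w \<subseteq> X \<and> word_prod w k \<noteq> 0)"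

definition in_l2 :: "(nat \<Rightarrow> complex) \<Rightarrow> bool" where
  "in_l2 \<xi> \<longleftrightarrow> summable (\<lambda>n. (cmod (\<xi> n))\<^sup>2)"

definition l2norm :: "(nat \<Rightarrow> complex) \<Rightarrow> real" where
  "l2norm \<xi> = sqrt (\<Sum>n. (cmod (\<xi> n))\<^sup>2)"

text \<open>Right regular representation: rho(m) delta_n = sum_k N^k_{n,m} delta_k
  (involution trivial), i.e. (rho(m) xi)(k) = sum_n N^k_{n,m} xi(n);
  only n <= k + m contribute.\<close>
definition rho :: "nat \<Rightarrow> (nat \<Rightarrow> complex) \<Rightarrow> (nat \<Rightarrow> complex)" where
  "rho m \<xi> = (\<lambda>k. \<Sum>n\<le>k + m. of_nat (fus k n m) * \<xi> n)"

definition KazX :: "real \<Rightarrow> nat set \<Rightarrow> (nat \<Rightarrow> (nat \<Rightarrow> complex) \<Rightarrow> (nat \<Rightarrow> complex)) \<Rightarrow> real" where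
  "KazX q X \<pi>rep = Inf {Max ((\<lambda>m. l2norm (\<lambda>k. \<pi>rep m \<xi> k - complex_of_real (dimq q m) * \<xi> k) / dimq q m) ` X)
                      | \<xi>. in_l2 \<xi> \<and> l2norm \<xi> = 1}"

definition Kaz :: "real \<Rightarrow> (nat \<Rightarrow> (nat \<Rightarrow> complex) \<Rightarrow> (nat \<Rightarrow> complex)) \<Rightarrow> real" where
  "Kaz q \<pi>rep = Inf {KazX q X \<pi>rep | X. fin_gen_set X}"

end

theory Submission
  imports Defs
begin

lemma qnum_nat:
  assumes q: "0 < q" "q < 1"
  shows "qnum q (real n) = (inverse (q^n) - q^n) / (inverse q - q)"
  using q by (simp add: qnum_def powr_minus powr_realpow)

lemma qden: assumes q: "0 < (q::real)" "q < 1" shows "inverse q - q > 0"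
proof -
  have "inverse q > 1" using q by (simp add: one_less_inverse_iff)
  thus ?thesis using q by linarith
qed

lemma qnum2_val: assumes q: "0 < q" "q < 1" shows "qnum q 2 = inverse q + q"
proof -
  have d: "inverse q - q > 0" using qden[OF q] .
  have "qnum q 2 = qnum q (real 2)" by simp
  also have "\<dots> = (inverse (q*q) - q*q) / (inverse q - q)" by (simp only: qnum_nat[OF q] power2_eq_square)
  also have "inverse (q*q) - q*q = (inverse q + q) * (inverse q - q)" by (simp add: algebra_simps inverse_mult_distrib)
  finally show ?thesis using d by simp
qed

lemma num_rec: assumes "(q::real) > 0" shows
 "inverse(q^(n+2)) - q^(n+2) = (inverse q + q)*(inverse(q^(n+1)) - q^(n+1)) - (inverse(q^n) - q^n)"
proof -
  have "inverse(q^(n+2)) = inverse (q^n) * inverse q * inverse q" by (simp add: power_add inverse_mult_distrib power2_eq_square)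
  moreover have "inverse(q^(n+1)) = inverse (q^n) * inverse q" by (simp add: inverse_mult_distrib)
  moreover have h: "\<And>x. q * (inverse q * x) = x" using assms by (simp add: mult.assoc[symmetric])
  ultimately show ?thesis by (simp add: algebra_simps power_add power2_eq_square h)
qed

lemma qnum_rec:
  assumes q: "0 < q" "q \<le> 1"
  shows "qnum q (real (n+2)) = qnum q 2 * qnum q (real (n+1)) - qnum q (real n)"
proof (cases "q = 1")
  case True thus ?thesis by (simp add: qnum_def)
next
  case False
  hence q1: "q < 1" using q by simp
  show ?thesis unfolding qnum2_val[OF q(1) q1]
    by (simp only: qnum_nat[OF q(1) q1] num_rec[OF q(1)]) (simp add: diff_divide_distrib right_diff_distrib times_divide_eq_right)
qed

lemma qnum_pos:
  assumes q: "0 < q" "q \<le> 1" and n: "n \<ge> 1"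
  shows "qnum q (real n) > 0"
proof (cases "q = 1")
  case True thus ?thesis using n by (simp add: qnum_def)
next
  case False
  hence q1: "q < 1" using q by simp
  have a: "q^n < 1" using q q1 n by (simp add: power_less_one_iff)
  have b: "inverse (q^n) > 1" using a q by (simp add: one_less_inverse_iff)
  have c: "inverse q - q > 0" using qden[OF q(1) q1] .
  have "inverse (q^n) - q^n > 0" using a b by linarith
  thus ?thesis using c by (simp only: qnum_nat[OF q(1) q1]) simp
qed

lemma qnum_1:
  assumes q: "0 < q" "q \<le> 1"
  shows "qnum q 1 = 1"
proof (cases "q = 1")
  case True thus ?thesis by (simp add: qnum_def)
next
  case False
  hence q1: "q < 1" using q by simp
  have d: "inverse q - q > 0" using qden[OF q(1) q1] .
  have "qnum q 1 = qnum q (real 1)" by simp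
  also have "\<dots> = 1" using d by (simp only: qnum_nat[OF q(1) q1]) simp
  finally show ?thesis .
qed

lemma qnum2_ge:
  assumes q: "0 < q" "q \<le> 1"
  shows "qnum q 2 \<ge> 2"
proof (cases "q = 1")
  case True thus ?thesis by (simp add: qnum_def)
next
  case False
  hence q1: "q < 1" using q by simp
  have e2: "qnum q 2 = inverse q + q" using qnum2_val[OF q(1) q1] .
  have "(1 - q)^2 \<ge> 0" by simp
  hence "1 + q*q \<ge> 2 * q" by (simp add: power2_eq_square algebra_simps)
  hence "q * 2 \<le> q * qnum q 2" using q e2 by (simp add: field_simps)
  thus ?thesis using q by simp
qed

lemma qnum2_eq:
  assumes q: "0 < q" "q \<le> 1"
  shows "1 - 2 / qnum q 2 = (1 - q)\<^sup>2 / (q\<^sup>2 + 1)"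
proof (cases "q = 1")
  case True thus ?thesis by (simp add: qnum_def)
next
  case False
  hence q1: "q < 1" using q by simp
  have e2: "qnum q 2 = inverse q + q" using qnum2_val[OF q(1) q1] .
  have p: "q^2 + 1 > 0" by (smt (verit) zero_le_power2)
  show ?thesis using q p unfolding e2 by (simp add: field_simps power2_eq_square)
qed

lemma qnum_growth:
  assumes q: "0 < q" "q \<le> 1" and n: "n \<ge> 2"
  shows "2 * qnum q (real n) \<ge> real n * qnum q 2"
proof -
  let ?Q = "\<lambda>n. qnum q (real n)"
  let ?c = "qnum q 2"
  have c2: "?c \<ge> 2" using qnum2_ge[OF q] .
  have D: "?Q (Suc k + 1) - ?Q (Suc k) \<ge> ?c - 1" for k
  proof (induction k)
    case 0 thus ?case using qnum_1[OF q] by simp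
  next
    case (Suc k)
    have r: "?Q (Suc k + 2) = ?c * ?Q (Suc k + 1) - ?Q (Suc k)" using qnum_rec[OF q] by blast
    have p: "?Q (Suc k + 1) > 0" by (rule qnum_pos[OF q]) simp
    have "(?c - 2) * ?Q (Suc k + 1) \<ge> 0" using c2 p by simp
    thus ?case using Suc r by (simp add: algebra_simps)
  qed
  have G: "?Q (k + 2) \<ge> ?c + real k * (?c - 1)" for k
  proof (induction k)
    case 0 thus ?case by simp
  next
    case (Suc k)
    have "?Q (Suc k + 1 + 1) - ?Q (Suc k + 1) \<ge> ?c - 1" using D[of "k+1"] by simp
    thus ?case using Suc by (simp add: algebra_simps)
  qed
  obtain k where k: "n = k + 2" using n by (metis add.commute le_add_diff_inverse)
  have "?Q n \<ge> ?c + real k * (?c - 1)" using G k by simp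
  moreover have "real k * (?c - 1) \<ge> real k * (?c / 2)" using c2 by (intro mult_left_mono) auto
  ultimately show ?thesis using k by (simp add: algebra_simps)
qed


lemma fus_1: "fus k n 1 = (if n = k+1 \<or> (k \<ge> 1 \<and> n = k - 1) then 1 else 0)"
proof -
  have "(nat \<bar>int n - int 1\<bar> \<le> k \<and> k \<le> n + 1 \<and> even (n + 1 + k)) = (n = k + 1 \<or> 1 \<le> k \<and> n = k - 1)"
  proof -
    have e: "nat \<bar>int n - int 1\<bar> = (if n \<ge> 1 then n - 1 else 1)" by auto
    show ?thesis unfolding e by presburger
  qed
  thus ?thesis unfolding fus_def by simp
qed

lemma rho1: "rho 1 \<xi> k = (if k = 0 then 0 else \<xi> (k-1)) + \<xi> (k+1)"
proof -
  have "rho 1 \<xi> k = (\<Sum>n\<le>k+1. (if n = k+1 then \<xi> n else 0) + (if k \<ge> 1 \<and> n = k - 1 then \<xi> n else 0))"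
    unfolding rho_def fus_1 by (intro sum.cong) auto
  also have "\<dots> = (if k = 0 then 0 else \<xi> (k-1)) + \<xi> (k+1)"
    by (simp add: sum.distrib sum.delta' )
  finally show ?thesis .
qed

lemma fmult_b0: "fmult (basis_el 0) (basis_el 0) = basis_el 0"
proof
  fix k
  have s: "{m. basis_el 0 m \<noteq> 0} = {0}" by (auto simp: basis_el_def)
  show "fmult (basis_el 0) (basis_el 0) k = basis_el 0 k"
    unfolding fmult_def s by (simp add: basis_el_def fus_def)
qed

lemma word_prod_zeros: "set w \<subseteq> {0} \<Longrightarrow> word_prod w = basis_el 0"
proof (induction w)
  case Nil thus ?case by (simp add: word_prod_def)
next
  case (Cons a w)
  hence "a = 0" "word_prod w = basis_el 0" by auto
  thus ?case by (simp add: word_prod_def fmult_b0)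
qed

lemma fin_gen_has_pos: assumes "fin_gen_set X" shows "\<exists>m\<in>X. m \<ge> 1"
proof (rule ccontr)
  assume "\<not> ?thesis"
  hence X: "X \<subseteq> {0}" by auto
  obtain w where w: "set w \<subseteq> X" "word_prod w 1 \<noteq> 0" using assms unfolding fin_gen_set_def by blast
  have "word_prod w = basis_el 0" using w X word_prod_zeros by blast
  thus False using w by (simp add: basis_el_def)
qed

lemma word_rep1:
  "finite {j. word_prod (replicate n 1) j \<noteq> 0} \<and> (\<forall>j. word_prod (replicate n 1) j \<noteq> 0 \<longrightarrow> j \<le> n)
   \<and> word_prod (replicate n 1) n \<noteq> 0"
proof (induction n)
  case 0 thus ?case by (simp add: word_prod_def basis_el_def)
next
  case (Suc n)
  let ?a = "word_prod (replicate n 1)"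
  have eq: "word_prod (replicate (Suc n) 1) = fmult (basis_el 1) ?a" by (simp add: word_prod_def)
  have s1: "{m. basis_el 1 m \<noteq> 0} = {1}" by (auto simp: basis_el_def)
  have f: "finite {j. ?a j \<noteq> 0}" and le: "\<And>j. ?a j \<noteq> 0 \<Longrightarrow> j \<le> n" and nz: "?a n \<noteq> 0" using Suc by auto
  have val: "fmult (basis_el 1) ?a k = (\<Sum>j\<in>{j. ?a j \<noteq> 0}. ?a j * fus k 1 j)" for k
    unfolding fmult_def s1 by (simp add: basis_el_def)
  have z: "fmult (basis_el 1) ?a k = 0" if "k > Suc n" for k
  proof -
    have "\<And>j. j \<le> n \<Longrightarrow> fus k 1 j = 0" using that by (simp add: fus_def)
    thus ?thesis unfolding val using le by (intro sum.neutral) auto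
  qed
  have "fmult (basis_el 1) ?a (Suc n) \<ge> ?a n * fus (Suc n) 1 n"
    unfolding val using f nz by (intro member_le_sum) auto
  moreover have "fus (Suc n) 1 n = 1" by (simp add: fus_def)
  ultimately have p: "fmult (basis_el 1) ?a (Suc n) \<noteq> 0" using nz by auto
  have sub: "{j. fmult (basis_el 1) ?a j \<noteq> 0} \<subseteq> {..Suc n}" using z by (auto simp: not_less[symmetric])
  show ?case unfolding eq using p sub z by (auto intro: finite_subset simp: not_less[symmetric])
qed

lemma fin_gen_1: "fin_gen_set {1}"
  unfolding fin_gen_set_def
proof (intro conjI allI)
  fix k
  show "\<exists>w. w \<noteq> [] \<and> set w \<subseteq> {1} \<and> word_prod w k \<noteq> 0"
  proof (cases "k = 0")
    case False
    thus ?thesis using word_rep1[of k] by (intro exI[of _ "replicate k 1"]) auto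
  next
    case True
    let ?a = "word_prod (replicate 1 1)"
    have s1: "{m. basis_el 1 m \<noteq> 0} = {1}" by (auto simp: basis_el_def)
    have f: "finite {j. ?a j \<noteq> 0}" and nz: "?a 1 \<noteq> 0" using word_rep1[of 1] by auto
    have eq: "word_prod (replicate 2 1) = fmult (basis_el 1) ?a" by (simp add: word_prod_def numeral_2_eq_2)
    have val: "fmult (basis_el 1) ?a 0 = (\<Sum>j\<in>{j. ?a j \<noteq> 0}. ?a j * fus 0 1 j)"
      unfolding fmult_def s1 by (simp add: basis_el_def)
    have "fmult (basis_el 1) ?a 0 \<ge> ?a 1 * fus 0 1 1"
      unfolding val using f nz by (intro member_le_sum) auto
    moreover have "fus 0 1 1 = 1" by (simp add: fus_def)
    ultimately have "word_prod (replicate 2 1) 0 \<noteq> 0" using nz eq by auto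
    thus ?thesis using True by (intro exI[of _ "replicate 2 1"]) auto
  qed
qed simp


lemma fus_iff: "fus k n m \<noteq> 0 \<longleftrightarrow> (n \<le> k+m \<and> m \<le> n+k \<and> k \<le> n+m \<and> even (n+m+k))"
proof -
  have "nat \<bar>int n - int m\<bar> \<le> k \<longleftrightarrow> n \<le> k+m \<and> m \<le> n+k" by arith
  thus ?thesis unfolding fus_def by auto
qed

lemma fus_real: "real (fus k n m) = (if fus k n m \<noteq> 0 then 1 else 0)"
  by (simp add: fus_def)

lemma fus_sq: "real (fus k n m) * real (fus k n m) = real (fus k n m)"
  by (simp add: fus_def)

lemma count1: "(\<Sum>n\<le>k+m. real (fus k n m)) \<le> real m + 1"
proof -
  let ?S = "{n\<in>{..k+m}. fus k n m \<noteq> 0}"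
  have "(\<Sum>n\<le>k+m. real (fus k n m)) = (\<Sum>n\<in>?S. 1)"
    by (subst sum.inter_filter) (auto simp: fus_real intro: sum.cong)
  also have "\<dots> = real (card ?S)" by simp
  also have "card ?S \<le> card ((\<lambda>j. k+m-2*j) ` {..m})"
  proof (rule card_mono)
    show "?S \<subseteq> (\<lambda>j. k+m-2*j) ` {..m}"
    proof
      fix n assume "n \<in> ?S"
      hence h: "n \<le> k+m \<and> m \<le> n+k \<and> k \<le> n+m \<and> even (n+m+k)" using fus_iff by auto
      have ev: "even (k+m-n)"
      proof -
        have s: "(k+m-n) + 2*n = n+m+k" using h by simp
        have "even ((k+m-n) + 2*n)" using h by (simp only: s)
        thus ?thesis by simp
      qed
      have e2: "2*((k+m-n) div 2) = k+m-n" using ev by simp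
      show "n \<in> (\<lambda>j. k+m-2*j) ` {..m}"
        by (rule image_eqI[of _ _ "(k+m-n) div 2"]) (use e2 h in auto)
    qed
  qed simp
  also have "\<dots> \<le> card {..m}" by (rule card_image_le) simp
  finally show ?thesis by simp
qed

lemma count2: "(\<Sum>k<K. real (fus k n m)) \<le> real m + 1"
proof -
  let ?S = "{k\<in>{..<K}. fus k n m \<noteq> 0}"
  have "(\<Sum>k<K. real (fus k n m)) = (\<Sum>n\<in>?S. 1)"
    by (subst sum.inter_filter) (auto simp: fus_real intro: sum.cong)
  also have "\<dots> = real (card ?S)" by simp
  also have "card ?S \<le> card ((\<lambda>j. n+m-2*j) ` {..m})"
  proof (rule card_mono)
    show "?S \<subseteq> (\<lambda>j. n+m-2*j) ` {..m}"
    proof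
      fix k assume "k \<in> ?S"
      hence h: "n \<le> k+m \<and> m \<le> n+k \<and> k \<le> n+m \<and> even (n+m+k)" using fus_iff by auto
      have ev: "even (n+m-k)"
      proof -
        have s: "(n+m-k) + 2*k = n+m+k" using h by simp
        have "even ((n+m-k) + 2*k)" using h by (simp only: s)
        thus ?thesis by simp
      qed
      have e2: "2*((n+m-k) div 2) = n+m-k" using ev by simp
      show "k \<in> (\<lambda>j. n+m-2*j) ` {..m}"
        by (rule image_eqI[of _ _ "(n+m-k) div 2"]) (use e2 h in auto)
    qed
  qed simp
  also have "\<dots> \<le> card {..m}" by (rule card_image_le) simp
  finally show ?thesis by simp
qed

lemma rho_bound_k:
  "(cmod (rho m \<xi> k))\<^sup>2 \<le> (real m + 1) * (\<Sum>n\<le>k+m. real (fus k n m) * (cmod (\<xi> n))\<^sup>2)"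
proof -
  let ?f = "\<lambda>n. real (fus k n m)"
  let ?S = "\<Sum>n\<le>k+m. ?f n * cmod (\<xi> n)"
  have fnn: "\<And>n. ?f n \<ge> 0" by simp
  have "cmod (rho m \<xi> k) \<le> (\<Sum>n\<le>k+m. cmod (of_nat (fus k n m) * \<xi> n))"
    unfolding rho_def by (rule norm_sum)
  also have "\<dots> = ?S" by (simp add: norm_mult)
  finally have a: "cmod (rho m \<xi> k) \<le> ?S" .
  have "?S = (\<Sum>n\<le>k+m. ?f n * (?f n * cmod (\<xi> n)))"
    by (intro sum.cong) (auto simp: mult.assoc[symmetric] fus_sq)
  hence "?S\<^sup>2 \<le> (\<Sum>n\<le>k+m. (?f n)\<^sup>2) * (\<Sum>n\<le>k+m. (?f n * cmod (\<xi> n))\<^sup>2)"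
    using Cauchy_Schwarz_ineq_sum by simp
  also have "\<dots> = (\<Sum>n\<le>k+m. ?f n) * (\<Sum>n\<le>k+m. ?f n * (cmod (\<xi> n))\<^sup>2)"
  proof -
    have e1: "\<And>n. (?f n)\<^sup>2 = ?f n" by (simp add: fus_real)
    have e2: "\<And>n. (?f n * cmod (\<xi> n))\<^sup>2 = ?f n * (cmod (\<xi> n))\<^sup>2" by (simp add: power_mult_distrib fus_real)
    show ?thesis by (simp only: e1 e2)
  qed
  also have "\<dots> \<le> (real m + 1) * (\<Sum>n\<le>k+m. ?f n * (cmod (\<xi> n))\<^sup>2)"
    by (intro mult_right_mono count1 sum_nonneg) simp
  finally have b: "?S\<^sup>2 \<le> (real m + 1) * (\<Sum>n\<le>k+m. ?f n * (cmod (\<xi> n))\<^sup>2)" .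
  have "(cmod (rho m \<xi> k))\<^sup>2 \<le> ?S\<^sup>2" using a by (intro power_mono) auto
  thus ?thesis using b by linarith
qed

lemma rho_fin:
  "(\<Sum>k<K. (cmod (rho m \<xi> k))\<^sup>2) \<le> (real m + 1)\<^sup>2 * (\<Sum>n<K+m. (cmod (\<xi> n))\<^sup>2)"
proof -
  let ?f = "\<lambda>k n. real (fus k n m)"
  let ?c = "\<lambda>n. (cmod (\<xi> n))\<^sup>2"
  have "(\<Sum>k<K. (cmod (rho m \<xi> k))\<^sup>2) \<le> (\<Sum>k<K. (real m + 1) * (\<Sum>n\<le>k+m. ?f k n * ?c n))"
    by (intro sum_mono rho_bound_k)
  also have "\<dots> = (\<Sum>k<K. (real m + 1) * (\<Sum>n<K+m. ?f k n * ?c n))"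
  proof (rule sum.cong[OF refl])
    fix k assume k: "k \<in> {..<K}"
    have "(\<Sum>n\<le>k+m. ?f k n * ?c n) = (\<Sum>n<K+m. ?f k n * ?c n)"
    proof (rule sum.mono_neutral_left)
      show "\<forall>i\<in>{..<K + m} - {..k + m}. ?f k i * ?c i = 0"
      proof
        fix i assume "i \<in> {..<K + m} - {..k + m}"
        hence "\<not> i \<le> k+m" by auto
        hence "fus k i m = 0" using fus_iff by blast
        thus "?f k i * ?c i = 0" by simp
      qed
      show "{..k + m} \<subseteq> {..<K + m}" using k by auto
    qed simp_all
    thus "(real m + 1) * (\<Sum>n\<le>k+m. ?f k n * ?c n) = (real m + 1) * (\<Sum>n<K+m. ?f k n * ?c n)" by simp
  qed
  also have "\<dots> = (real m + 1) * (\<Sum>n<K+m. \<Sum>k<K. ?f k n * ?c n)"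
    by (simp add: sum_distrib_left sum.swap[of _ "{..<K}"])
  also have "\<dots> = (real m + 1) * (\<Sum>n<K+m. (\<Sum>k<K. ?f k n) * ?c n)"
    by (simp add: sum_distrib_right)
  also have "\<dots> \<le> (real m + 1) * (\<Sum>n<K+m. (real m + 1) * ?c n)"
    by (intro mult_left_mono sum_mono mult_right_mono count2) auto
  also have "\<dots> = (real m + 1)\<^sup>2 * (\<Sum>n<K+m. ?c n)"
    by (simp add: sum_distrib_left power2_eq_square mult.assoc)
  finally show ?thesis .
qed


lemma l2_facts:
  assumes "in_l2 \<xi>" "l2norm \<xi> = 1"
  shows "summable (\<lambda>n. (cmod (\<xi> n))\<^sup>2)" "(\<Sum>n. (cmod (\<xi> n))\<^sup>2) = 1"
    "\<And>K. (\<Sum>n<K. (cmod (\<xi> n))\<^sup>2) \<le> 1"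
proof -
  show s: "summable (\<lambda>n. (cmod (\<xi> n))\<^sup>2)" using assms(1) unfolding in_l2_def .
  have nn: "(\<Sum>n. (cmod (\<xi> n))\<^sup>2) \<ge> 0" by (intro suminf_nonneg s) simp
  show e: "(\<Sum>n. (cmod (\<xi> n))\<^sup>2) = 1" using assms(2) nn unfolding l2norm_def by simp
  fix K show "(\<Sum>n<K. (cmod (\<xi> n))\<^sup>2) \<le> 1" using sum_le_suminf[OF s, of "{..<K}"] e by simp
qed

lemma L2_lessThan: "L2_set (\<lambda>k. cmod (g k)) {..<K} = sqrt (\<Sum>k<K. (cmod (g k))\<^sup>2)"
  by (simp add: L2_set_def)

lemma lower_l2:
  assumes xi: "in_l2 \<xi>" "l2norm \<xi> = 1" and d: "d \<ge> 0"
  shows "l2norm (\<lambda>k. rho m \<xi> k - complex_of_real d * \<xi> k) \<ge> d - (real m + 1)"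
proof -
  define \<eta> where "\<eta> = (\<lambda>k. rho m \<xi> k - complex_of_real d * \<xi> k)"
  let ?L = "\<lambda>g K. L2_set (\<lambda>k. cmod (g k)) {..<K}"
  have sx: "summable (\<lambda>n. (cmod (\<xi> n))\<^sup>2)" and ex: "(\<Sum>n. (cmod (\<xi> n))\<^sup>2) = 1"
    and px: "\<And>K. (\<Sum>n<K. (cmod (\<xi> n))\<^sup>2) \<le> 1" using l2_facts[OF xi] by auto
  have Lx: "?L \<xi> K \<le> 1" for K unfolding L2_lessThan using px by simp
  have Lr: "?L (rho m \<xi>) K \<le> real m + 1" for K
  proof -
    have "(\<Sum>k<K. (cmod (rho m \<xi> k))\<^sup>2) \<le> (real m + 1)\<^sup>2 * (\<Sum>n<K+m. (cmod (\<xi> n))\<^sup>2)" by (rule rho_fin)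
    also have "\<dots> \<le> (real m + 1)\<^sup>2" using px[of "K+m"] by (simp add: mult_left_le)
    finally have "sqrt (\<Sum>k<K. (cmod (rho m \<xi> k))\<^sup>2) \<le> sqrt ((real m + 1)\<^sup>2)" by (rule real_sqrt_le_mono)
    thus ?thesis unfolding L2_lessThan by simp
  qed
  have Le: "?L \<eta> K \<le> real m + 1 + d" for K
  proof -
    have "?L \<eta> K \<le> L2_set (\<lambda>k. cmod (rho m \<xi> k) + d * cmod (\<xi> k)) {..<K}"
    proof (rule L2_set_mono)
      fix k
      have "cmod (\<eta> k) \<le> cmod (rho m \<xi> k) + cmod (complex_of_real d * \<xi> k)" unfolding \<eta>_def by (rule norm_triangle_ineq4)
      thus "cmod (\<eta> k) \<le> cmod (rho m \<xi> k) + d * cmod (\<xi> k)" using d by (simp add: norm_mult)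
    qed simp
    also have "\<dots> \<le> ?L (rho m \<xi>) K + L2_set (\<lambda>k. d * cmod (\<xi> k)) {..<K}" by (rule L2_set_triangle_ineq)
    also have "L2_set (\<lambda>k. d * cmod (\<xi> k)) {..<K} = d * ?L \<xi> K" using d by (simp add: L2_set_right_distrib)
    finally show ?thesis using Lr[of K] Lx[of K] d by (smt (verit) mult_left_le)
  qed
  have se: "summable (\<lambda>k. (cmod (\<eta> k))\<^sup>2)"
  proof (rule summableI_nonneg_bounded)
    fix K
    have "sqrt (\<Sum>k<K. (cmod (\<eta> k))\<^sup>2) \<le> real m + 1 + d" using Le[of K] unfolding L2_lessThan .
    hence "(\<Sum>k<K. (cmod (\<eta> k))\<^sup>2) \<le> (real m + 1 + d)\<^sup>2" using d
      by (metis real_le_lsqrt real_sqrt_ge_0_iff real_sqrt_le_iff order_trans sum_nonneg zero_le_power2 sqrt_le_D)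
    thus "(\<Sum>k<K. (cmod (\<eta> k))\<^sup>2) \<le> (real m + 1 + d)\<^sup>2" .
  qed simp
  have bound: "d * sqrt (\<Sum>n<K. (cmod (\<xi> n))\<^sup>2) - (real m + 1) \<le> l2norm \<eta>" for K
  proof -
    have "d * ?L \<xi> K = L2_set (\<lambda>k. d * cmod (\<xi> k)) {..<K}" using d by (simp add: L2_set_right_distrib)
    also have "\<dots> \<le> L2_set (\<lambda>k. cmod (\<eta> k) + cmod (rho m \<xi> k)) {..<K}"
    proof (rule L2_set_mono)
      fix k
      have "complex_of_real d * \<xi> k = rho m \<xi> k - \<eta> k" unfolding \<eta>_def by simp
      hence "cmod (complex_of_real d * \<xi> k) \<le> cmod (\<eta> k) + cmod (rho m \<xi> k)"
        by (metis norm_triangle_ineq4 add.commute)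
      thus "d * cmod (\<xi> k) \<le> cmod (\<eta> k) + cmod (rho m \<xi> k)" using d by (simp add: norm_mult)
    qed (use d in simp)
    also have "\<dots> \<le> ?L \<eta> K + ?L (rho m \<xi>) K" by (rule L2_set_triangle_ineq)
    also have "?L \<eta> K \<le> l2norm \<eta>"
      unfolding L2_lessThan l2norm_def
      by (intro real_sqrt_le_mono sum_le_suminf se) auto
    finally show ?thesis using Lr[of K] unfolding L2_lessThan by linarith
  qed
  have lim: "(\<lambda>K. d * sqrt (\<Sum>n<K. (cmod (\<xi> n))\<^sup>2) - (real m + 1)) \<longlonglongrightarrow> d * sqrt 1 - (real m + 1)"
    by (intro tendsto_intros) (use sx ex summable_LIMSEQ in force)
  have "d * sqrt 1 - (real m + 1) \<le> l2norm \<eta>"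
    by (rule LIMSEQ_le_const2[OF lim]) (use bound in auto)
  thus ?thesis unfolding \<eta>_def by simp
qed


definition xv :: "nat \<Rightarrow> nat \<Rightarrow> real" where
  "xv N k = (if k < N then 1 / sqrt (real N) else 0)"

lemma xv_l2: assumes "N \<ge> 1"
  shows "in_l2 (\<lambda>k. complex_of_real (xv N k))" "l2norm (\<lambda>k. complex_of_real (xv N k)) = 1"
proof -
  have z: "\<And>k. k \<notin> {..<N} \<Longrightarrow> (cmod (complex_of_real (xv N k)))\<^sup>2 = 0" by (simp add: xv_def)
  show "in_l2 (\<lambda>k. complex_of_real (xv N k))" unfolding in_l2_def by (rule summable_finite[of "{..<N}"]) (use z in auto)
  have "(\<Sum>k. (cmod (complex_of_real (xv N k)))\<^sup>2) = (\<Sum>k<N. (cmod (complex_of_real (xv N k)))\<^sup>2)"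
    by (rule suminf_finite[OF _ z]) simp
  also have "\<dots> = (\<Sum>k<N. 1 / real N)" by (intro sum.cong) (simp_all only: norm_of_real power2_abs, auto simp: xv_def power_divide)
  also have "\<dots> = 1" using assms by simp
  finally show "l2norm (\<lambda>k. complex_of_real (xv N k)) = 1" unfolding l2norm_def by simp
qed

lemma upper_vec:
  assumes N: "N \<ge> 2" and c: "c \<ge> 0"
  shows "l2norm (\<lambda>k. rho 1 (\<lambda>k. complex_of_real (xv N k)) k - complex_of_real (c + 2) * complex_of_real (xv N k))
         \<le> c + sqrt (3 / real N)"
proof -
  let ?x = "xv N"
  let ?r = "1 / sqrt (real N)"
  define a where "a = (\<lambda>k. (if k = 0 then 0 else ?x (k-1)) + ?x (k+1) - 2 * ?x k)"
  define \<eta> where "\<eta> = (\<lambda>k. rho 1 (\<lambda>k. complex_of_real (xv N k)) k - complex_of_real (c + 2) * complex_of_real (xv N k))"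
  have eta: "\<eta> k = complex_of_real (a k - c * ?x k)" for k
    unfolding \<eta>_def a_def rho1 by (simp add: algebra_simps)
  have z: "\<And>k. k \<notin> {..N} \<Longrightarrow> (cmod (\<eta> k))\<^sup>2 = 0" unfolding eta a_def xv_def by auto
  have "(\<Sum>k. (cmod (\<eta> k))\<^sup>2) = (\<Sum>k\<le>N. (cmod (\<eta> k))\<^sup>2)" by (rule suminf_finite[OF _ z]) simp
  moreover have "\<And>k. (cmod (\<eta> k))\<^sup>2 = (\<bar>a k - c * ?x k\<bar>)\<^sup>2" by (simp only: eta norm_of_real)
  ultimately have "l2norm \<eta> = L2_set (\<lambda>k. \<bar>a k - c * ?x k\<bar>) {..N}" unfolding l2norm_def L2_set_def by simp
  also have "\<dots> \<le> L2_set (\<lambda>k. \<bar>a k\<bar> + c * ?x k) {..N}"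
  proof (rule L2_set_mono)
    fix i
    have "c * ?x i \<ge> 0" using c by (simp add: xv_def)
    thus "\<bar>a i - c * ?x i\<bar> \<le> \<bar>a i\<bar> + c * ?x i" by arith
  qed simp
  also have "\<dots> \<le> L2_set (\<lambda>k. \<bar>a k\<bar>) {..N} + L2_set (\<lambda>k. c * ?x k) {..N}" by (rule L2_set_triangle_ineq)
  also have "L2_set (\<lambda>k. c * ?x k) {..N} = c * L2_set ?x {..N}" using c by (simp add: L2_set_right_distrib)
  also have "L2_set ?x {..N} = 1"
  proof -
    have "(\<Sum>k\<le>N. (?x k)\<^sup>2) = (\<Sum>k<N. (?x k)\<^sup>2)" by (simp add: lessThan_Suc_atMost[symmetric] xv_def)
    also have "\<dots> = (\<Sum>k<N. 1 / real N)" by (intro sum.cong) (auto simp: xv_def power_divide)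
    also have "\<dots> = 1" using N by simp
    finally show ?thesis unfolding L2_set_def by simp
  qed
  also have "L2_set (\<lambda>k. \<bar>a k\<bar>) {..N} = sqrt (3 / real N)"
  proof -
    have av: "\<bar>a k\<bar> = (if k = 0 \<or> k = N - 1 \<or> k = N then ?r else 0)" if "k \<le> N" for k
    proof -
      have "k = 0 \<or> (0 < k \<and> k + 1 < N) \<or> k = N - 1 \<or> k = N" using that N by linarith
      thus ?thesis using N that by (auto simp: a_def xv_def)
    qed
    have "(\<Sum>k\<le>N. \<bar>a k\<bar>\<^sup>2) = (\<Sum>k\<le>N. (if k = 0 \<or> k = N - 1 \<or> k = N then 1 / real N else 0))"
      by (intro sum.cong) (auto simp: av power_divide)
    also have "\<dots> = (\<Sum>k\<in>{k\<in>{..N}. k = 0 \<or> k = N - 1 \<or> k = N}. 1 / real N)"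
      by (subst sum.inter_filter) auto
    also have "{k\<in>{..N}. k = 0 \<or> k = N - 1 \<or> k = N} = {0, N - 1, N}" by auto
    also have "(\<Sum>k\<in>{0, N - 1, N}. 1 / real N) = 3 / real N" using N by simp
    finally show ?thesis unfolding L2_set_def by simp
  qed
  finally show ?thesis unfolding \<eta>_def by simp
qed


lemma dimq_1: "dimq q 1 = qnum q 2" by (simp add: dimq_def)

lemma dimq_pos: assumes "0 < q" "q \<le> 1" shows "dimq q m > 0"
proof -
  have "dimq q m = qnum q (real (Suc m))" by (simp add: dimq_def add.commute)
  thus ?thesis using qnum_pos[OF assms, of "Suc m"] by simp
qed

lemma KazX_lower:
  assumes q: "0 < q" "q \<le> 1" and X: "fin_gen_set X"
  shows "KazX q X rho \<ge> 1 - 2 / qnum q 2"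
  unfolding KazX_def
proof (rule cInf_greatest)
  show "{Max ((\<lambda>m. l2norm (\<lambda>k. rho m \<xi> k - complex_of_real (dimq q m) * \<xi> k) / dimq q m) ` X) |\<xi>.
          in_l2 \<xi> \<and> l2norm \<xi> = 1} \<noteq> {}"
    using xv_l2[of 2] by auto
next
  fix v assume "v \<in> {Max ((\<lambda>m. l2norm (\<lambda>k. rho m \<xi> k - complex_of_real (dimq q m) * \<xi> k) / dimq q m) ` X) |\<xi>.
          in_l2 \<xi> \<and> l2norm \<xi> = 1}"
  then obtain \<xi> where xi: "in_l2 \<xi>" "l2norm \<xi> = 1"
    and v: "v = Max ((\<lambda>m. l2norm (\<lambda>k. rho m \<xi> k - complex_of_real (dimq q m) * \<xi> k) / dimq q m) ` X)" by blast
  obtain m where m: "m \<in> X" "m \<ge> 1" using fin_gen_has_pos[OF X] by blast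
  have fin: "finite X" using X unfolding fin_gen_set_def by simp
  let ?d = "dimq q m"
  have dpos: "?d > 0" using dimq_pos[OF q] .
  have c2: "qnum q 2 > 0" using qnum2_ge[OF q] by simp
  have "v \<ge> l2norm (\<lambda>k. rho m \<xi> k - complex_of_real ?d * \<xi> k) / ?d"
    unfolding v using fin m by (intro Max_ge) auto
  moreover have "l2norm (\<lambda>k. rho m \<xi> k - complex_of_real ?d * \<xi> k) \<ge> ?d - (real m + 1)"
    using lower_l2[OF xi] dpos by simp
  moreover have "2 * ?d \<ge> (real m + 1) * qnum q 2"
  proof -
    have "2 * qnum q (real (Suc m)) \<ge> real (Suc m) * qnum q 2" using qnum_growth[OF q, of "Suc m"] m by simp
    thus ?thesis by (simp add: dimq_def add.commute)
  qed
  ultimately have "v \<ge> (?d - (real m + 1)) / ?d" using dpos by (meson divide_right_mono order_trans less_imp_le)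
  moreover have "(?d - (real m + 1)) / ?d \<ge> 1 - 2 / qnum q 2"
  proof -
    have "(real m + 1) / ?d \<le> 2 / qnum q 2"
      using \<open>2 * ?d \<ge> (real m + 1) * qnum q 2\<close> dpos c2 by (simp add: field_simps)
    moreover have "(?d - (real m + 1)) / ?d = 1 - (real m + 1) / ?d" using dpos by (simp add: field_simps)
    ultimately show ?thesis by linarith
  qed
  ultimately show "1 - 2 / qnum q 2 \<le> v" by linarith
qed

lemma KazX_upper:
  assumes q: "0 < q" "q \<le> 1"
  shows "KazX q {1} rho \<le> 1 - 2 / qnum q 2"
proof (rule field_le_epsilon)
  fix e :: real assume e: "e > 0"
  let ?c2 = "qnum q 2"
  have c2: "?c2 \<ge> 2" using qnum2_ge[OF q] .
  obtain n :: nat where n: "3 / (e * ?c2)\<^sup>2 < real n" using reals_Archimedean2 by blast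
  define N where "N = n + 2"
  have N2: "N \<ge> 2" unfolding N_def by simp
  have ec: "e * ?c2 > 0" using e c2 by simp
  have "3 / (e * ?c2)\<^sup>2 < real N" using n unfolding N_def by simp
  moreover have "(e * ?c2)\<^sup>2 > 0" using ec by (intro zero_less_power) 
  ultimately have "3 < real N * (e * ?c2)\<^sup>2" by (simp add: divide_less_eq)
  hence "3 / real N \<le> (e * ?c2)\<^sup>2" using N2 by (simp add: field_simps)
  hence sq: "sqrt (3 / real N) \<le> e * ?c2" using ec by (metis abs_of_pos real_sqrt_abs real_sqrt_le_mono)
  let ?S = "{Max ((\<lambda>m. l2norm (\<lambda>k. rho m \<xi> k - complex_of_real (dimq q m) * \<xi> k) / dimq q m) ` {1}) |\<xi>.
          in_l2 \<xi> \<and> l2norm \<xi> = 1}"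
  let ?\<xi> = "\<lambda>k. complex_of_real (xv N k)"
  have val: "Max ((\<lambda>m. l2norm (\<lambda>k. rho m \<xi> k - complex_of_real (dimq q m) * \<xi> k) / dimq q m) ` {1})
      = l2norm (\<lambda>k. rho 1 \<xi> k - complex_of_real ?c2 * \<xi> k) / ?c2" for \<xi>
    by (simp only: image_insert image_empty Max_singleton dimq_1)
  have "KazX q {1} rho = Inf ?S" unfolding KazX_def ..
  also have "Inf ?S \<le> l2norm (\<lambda>k. rho 1 ?\<xi> k - complex_of_real ?c2 * ?\<xi> k) / ?c2"
  proof (rule cInf_lower)
    show "l2norm (\<lambda>k. rho 1 ?\<xi> k - complex_of_real ?c2 * ?\<xi> k) / ?c2 \<in> ?S"
      unfolding val using xv_l2[of N] N2 by auto
    show "bdd_below ?S"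
    proof (rule bdd_belowI[of _ 0])
      fix x assume "x \<in> ?S"
      then obtain \<xi> where x: "x = l2norm (\<lambda>k. rho 1 \<xi> k - complex_of_real ?c2 * \<xi> k) / ?c2"
        and xi: "in_l2 \<xi>" "l2norm \<xi> = 1"
        unfolding val by blast
      have "l2norm (\<lambda>k. rho 1 \<xi> k - complex_of_real ?c2 * \<xi> k) \<ge> ?c2 - (real 1 + 1)"
        using lower_l2[OF xi, of ?c2 1] c2 by simp
      thus "0 \<le> x" unfolding x using c2 by simp
    qed
  qed
  also have "\<dots> \<le> ((?c2 - 2) + sqrt (3 / real N)) / ?c2"
  proof (rule divide_right_mono)
    have "l2norm (\<lambda>k. rho 1 ?\<xi> k - complex_of_real ((?c2 - 2) + 2) * ?\<xi> k) \<le> (?c2 - 2) + sqrt (3 / real N)"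
      by (rule upper_vec[OF N2]) (use c2 in simp)
    thus "l2norm (\<lambda>k. rho 1 ?\<xi> k - complex_of_real ?c2 * ?\<xi> k) \<le> (?c2 - 2) + sqrt (3 / real N)" by simp
  qed (use c2 in simp)
  also have "\<dots> \<le> ((?c2 - 2) + e * ?c2) / ?c2" using sq c2 by (intro divide_right_mono) auto
  also have "\<dots> = 1 - 2 / ?c2 + e" using c2 by (simp add: field_simps)
  finally show "KazX q {1} rho \<le> 1 - 2 / ?c2 + e" .
qed

theorem proposition4p6:
  fixes q :: real
  assumes "0 < q" and "q \<le> 1"
  shows "Kaz q rho = 1 - 2 / qnum q 2 \<and> 1 - 2 / qnum q 2 = (1 - q)\<^sup>2 / (q\<^sup>2 + 1)"
proof
  have q: "0 < q" "q \<le> 1" using assms by auto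
  let ?T = "{KazX q X rho | X. fin_gen_set X}"
  have lo: "Inf ?T \<ge> 1 - 2 / qnum q 2"
    by (rule cInf_greatest) (use fin_gen_1 KazX_lower[OF q] in auto)
  have "Inf ?T \<le> KazX q {1} rho"
    by (rule cInf_lower) (use fin_gen_1 KazX_lower[OF q] in \<open>auto intro: bdd_belowI[of _ "1 - 2 / qnum q 2"]\<close>)
  with KazX_upper[OF q] lo show "Kaz q rho = 1 - 2 / qnum q 2" unfolding Kaz_def by linarith
  show "1 - 2 / qnum q 2 = (1 - q)\<^sup>2 / (q\<^sup>2 + 1)" by (rule qnum2_eq[OF q])
qed


end
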